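(* Let $\{X_n\}_{n=-\infty}^{\infty}$ be a stationary and ergodic time series taking values in a finite alphabet $\mathcal{X}$. Let $K_n\ge1$ and $J_n\ge1$ be nondecreasing sequences of positive integers with $K_n\to\infty$, $J_n\to\infty$ and $\lim_{n\to\infty}J_n/n=0$. Then $\lim_{n\to\infty}\kappa_n=\infty$ almost surely.
   Context: Notation: $X_m^n=(X_m,\dots,X_n)$. For $k\ge1$ and $n\ge0$, $\tau^k_0(n)=0$ and for $i\ge1$, $\tau^k_i(n)=\min\{t>\tau^k_{i-1}(n): X_{n-k+1-t}^{n-t}=X_{n-k+1}^n\}$. Define $\kappa_n=\max\{1\le k\le K_n:\tau^k_{J_n}(n)\le n-k+1\}$ if such a $k$ exists, and $\kappa_n=0$ otherwise; i.e. $\kappa_n$ is the largest $k\le K_n$ such that the block $X_{n-k+1}^n$ has at least $J_n$ earlier occurrences within the data segment $X_0^n$. *)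

theory Defs
  imports "HOL-Probability.Probability"
begin

abbreviation path_space :: "(int \<Rightarrow> 'b) measure" where
  "path_space \<equiv> PiM UNIV (\<lambda>_. count_space UNIV)"

definition stationary_process :: "'a measure \<Rightarrow> (int \<Rightarrow> 'a \<Rightarrow> 'b) \<Rightarrow> bool" where
  "stationary_process M X \<longleftrightarrow>
     (\<forall>i. X i \<in> measurable M (count_space UNIV)) \<and>
     (\<forall>s::int. distr M path_space (\<lambda>\<omega> i. X (i + s) \<omega>) = distr M path_space (\<lambda>\<omega> i. X i \<omega>))"

definition ergodic_process :: "'a measure \<Rightarrow> (int \<Rightarrow> 'a \<Rightarrow> 'b) \<Rightarrow> bool" where
  "ergodic_process M X \<longleftrightarrow>
     (\<forall>A \<in> sets path_space. (\<forall>x. x \<in> A \<longleftrightarrow> (\<lambda>i. x (i + 1)) \<in> A) \<longrightarrow>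
        measure M {\<omega> \<in> space M. (\<lambda>i. X i \<omega>) \<in> A} \<in> {0, 1})"

definition blk_match :: "(int \<Rightarrow> 'a \<Rightarrow> 'b) \<Rightarrow> nat \<Rightarrow> nat \<Rightarrow> nat \<Rightarrow> 'a \<Rightarrow> bool" where
  "blk_match X k n t \<omega> \<longleftrightarrow>
     (\<forall>j<k. X (int n - int k + 1 - int t + int j) \<omega> = X (int n - int k + 1 + int j) \<omega>)"

fun tau :: "(int \<Rightarrow> 'a \<Rightarrow> 'b) \<Rightarrow> nat \<Rightarrow> nat \<Rightarrow> nat \<Rightarrow> 'a \<Rightarrow> enat" where
  "tau X k n 0 \<omega> = 0"
| "tau X k n (Suc i) \<omega> =
     (if tau X k n i \<omega> = \<infinity> then \<infinity>
      else let s = the_enat (tau X k n i \<omega>) in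
        (if \<exists>t>s. blk_match X k n t \<omega>
         then enat (LEAST t. t > s \<and> blk_match X k n t \<omega>) else \<infinity>))"

text \<open>kappa_n; the condition tau <= n-k+1 is read over the integers.\<close>
definition kappa :: "(int \<Rightarrow> 'a \<Rightarrow> 'b) \<Rightarrow> (nat \<Rightarrow> nat) \<Rightarrow> (nat \<Rightarrow> nat) \<Rightarrow> nat \<Rightarrow> 'a \<Rightarrow> nat" where
  "kappa X K J n \<omega> =
     (let S = {k. 1 \<le> k \<and> k \<le> K n \<and> k \<le> n + 1 \<and> tau X k n (J n) \<omega> \<le> enat (n + 1 - k)}
      in if S = {} then 0 else Max S)"

end

theory Submission
  imports Defs
begin

definition sh :: "nat \<Rightarrow> (int \<Rightarrow> 'b) \<Rightarrow> (int \<Rightarrow> 'b)" where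
  "sh m x = (\<lambda>i. x (i + int m))"
definition pcnt :: "(int \<Rightarrow> 'b) set \<Rightarrow> nat \<Rightarrow> (int \<Rightarrow> 'b) \<Rightarrow> nat" where
  "pcnt C n x = (\<Sum>m<n. if sh m x \<in> C then 1 else 0)"
lemma sp: "space (path_space :: (int \<Rightarrow> 'b) measure) = UNIV" by (simp add: space_PiM)
lemma coord_meas[measurable]: "(\<lambda>x. x i) \<in> measurable (path_space :: (int \<Rightarrow> 'b) measure) (count_space UNIV)"
  by (rule measurable_component_singleton) simp
lemma sh_meas[measurable]: "sh m \<in> measurable (path_space :: (int \<Rightarrow> 'b) measure) path_space"
  unfolding sh_def by (rule measurable_PiM_single') (auto simp: sp)
lemma pcnt_meas[measurable]: assumes [measurable]: "C \<in> sets (path_space :: (int \<Rightarrow> 'b) measure)" 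
  shows "(\<lambda>x. real (pcnt C n x)) \<in> borel_measurable (path_space :: (int \<Rightarrow> 'b) measure)"
  unfolding pcnt_def by measurable
lemma predS: "Measurable.pred (path_space :: (int \<Rightarrow> 'b) measure) P \<Longrightarrow> {x. P x} \<in> sets (path_space :: (int \<Rightarrow> 'b) measure)"
  by (simp add: pred_def sp)
lemma assumes [measurable]: "C \<in> sets (path_space :: (int \<Rightarrow> 'b) measure)"
  shows "{x. \<exists>j::nat. \<exists>N::nat. \<forall>n\<ge>N. real (pcnt C n x) \<ge> real n / real (Suc j)} \<in> sets (path_space :: (int \<Rightarrow> 'b) measure)"
  by (rule predS) measurable
lemma "{y::int\<Rightarrow>'b. \<forall>j<length bl. y (int j) = bl!j} \<in> sets path_space"
  by (rule predS) measurable

lemma sh_0[simp]: "sh 0 x = x" by (simp add: sh_def)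
lemma sh_sh[simp]: "sh m (sh i x) = sh (i+m) x" by (simp add: sh_def ac_simps)
lemma pcnt_0[simp]: "pcnt C 0 x = 0" by (simp add: pcnt_def)
lemma pcnt_Suc: "pcnt C (Suc n) x = pcnt C n x + (if sh n x \<in> C then 1 else 0)"
  by (simp add: pcnt_def)
lemma pcnt_add: "pcnt C (i+n) x = pcnt C i x + pcnt C n (sh i x)"
  by (induction n) (simp_all add: pcnt_Suc)
lemma pcnt_front: "pcnt C (Suc n) x = (if x \<in> C then 1 else 0) + pcnt C n (sh 1 x)"
  using pcnt_add[of C 1 n x] by (simp add: pcnt_def)
lemma pcnt_mono: "m \<le> n \<Longrightarrow> pcnt C m x \<le> pcnt C n x"
  using pcnt_add[of C m "n-m" x] by simp
lemma pcnt_le: "pcnt C n x \<le> n"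
  by (induction n) (simp_all add: pcnt_Suc)

lemma cover:
  assumes N: "N \<ge> 1" and eps: "\<epsilon> \<ge> 0"
    and good: "\<And>i. sh i x \<notin> B \<Longrightarrow> \<exists>n\<in>{1..N}. real (pcnt C n (sh i x)) < \<epsilon> * n"
  shows "\<exists>i. L \<le> i \<and> i \<le> L + N \<and> real (pcnt C i x) \<le> \<epsilon> * i + real (pcnt B i x)"
proof (induction L)
  case 0 then show ?case by (intro exI[of _ 0]) simp
next
  case (Suc L)
  then obtain i where i: "L \<le> i" "i \<le> L + N" "real (pcnt C i x) \<le> \<epsilon> * i + real (pcnt B i x)" by blast
  show ?case
  proof (cases "i \<ge> Suc L")
    case True then show ?thesis using i by (intro exI[of _ i]) auto
  next
    case False
    then have iL: "i = L" using i by simp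
    show ?thesis
    proof (cases "sh i x \<in> B")
      case True
      have "real (pcnt C (Suc i) x) \<le> real (pcnt C i x) + 1" by (simp add: pcnt_Suc)
      also have "\<dots> \<le> \<epsilon> * i + real (pcnt B i x) + 1" using i by simp
      also have "\<dots> \<le> \<epsilon> * Suc i + real (pcnt B (Suc i) x)" using True eps by (simp add: pcnt_Suc algebra_simps)
      finally show ?thesis using iL N by (intro exI[of _ "Suc i"]) auto
    next
      case False
      then obtain n where n: "n \<in> {1..N}" "real (pcnt C n (sh i x)) < \<epsilon> * n" using good by blast
      have "real (pcnt C (i+n) x) = real (pcnt C i x) + real (pcnt C n (sh i x))" by (simp add: pcnt_add)
      also have "\<dots> \<le> \<epsilon> * i + real (pcnt B i x) + \<epsilon> * n" using i n by simp
      also have "\<dots> \<le> \<epsilon> * (i+n) + real (pcnt B (i+n) x)" using pcnt_mono[of i "i+n" B x] by (simp add: algebra_simps)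
      finally show ?thesis using iL n by (intro exI[of _ "i+n"]) auto
    qed
  qed
qed

lemma cover2:
  assumes N: "N \<ge> 1" and eps: "\<epsilon> \<ge> 0"
    and good: "\<And>i. sh i x \<notin> B \<Longrightarrow> \<exists>n\<in>{1..N}. real (pcnt C n (sh i x)) < \<epsilon> * n"
  shows "real (pcnt C L x) \<le> \<epsilon> * real (L + N) + real (pcnt B (L + N) x)"
proof -
  obtain i where i: "L \<le> i" "i \<le> L + N" "real (pcnt C i x) \<le> \<epsilon> * i + real (pcnt B i x)"
    using cover[OF assms] by blast
  have "real (pcnt C L x) \<le> real (pcnt C i x)" using pcnt_mono[OF i(1)] by simp
  also have "\<dots> \<le> \<epsilon> * i + real (pcnt B i x)" by fact
  also have "\<dots> \<le> \<epsilon> * real (L + N) + real (pcnt B (L + N) x)"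
    using pcnt_mono[OF i(2), of B x] i(2) eps by (intro add_mono mult_left_mono) auto
  finally show ?thesis .
qed


lemma sh_vimage_sets[measurable]: "A \<in> sets (path_space :: (int \<Rightarrow> 'b) measure) \<Longrightarrow> sh m -` A \<in> sets (path_space :: (int \<Rightarrow> 'b) measure)"
  using measurable_sets[OF sh_meas[of m] , of A] by (simp add: sp)

lemma pcnt_ind: "real (pcnt A n x) = (\<Sum>m<n. indicator (sh m -` A) x)"
  by (induction n) (simp_all add: pcnt_Suc indicator_def)

lemma core:
  fixes \<mu> :: "(int \<Rightarrow> 'b) measure" and C :: "(int \<Rightarrow> 'b) set"
  assumes P: "prob_space \<mu>" and S: "sets \<mu> = sets path_space"
   and inv: "\<And>m A. A \<in> sets path_space \<Longrightarrow> measure \<mu> (sh m -` A) = measure \<mu> A"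
   and erg: "\<And>A. A \<in> sets path_space \<Longrightarrow> (\<forall>x. x \<in> A \<longleftrightarrow> sh 1 x \<in> A) \<Longrightarrow> measure \<mu> A = 0 \<or> measure \<mu> A = 1"
   and C[measurable]: "C \<in> sets path_space" and pos: "measure \<mu> C > 0"
  shows "AE x in \<mu>. \<exists>j::nat. \<exists>N::nat. \<forall>n\<ge>N. real (pcnt C n x) \<ge> real n / real (Suc j)"
proof -
  interpret prob_space \<mu> by fact
  have sp_mu: "space \<mu> = UNIV" using sets_eq_imp_space_eq[OF S] sp by simp
  note [measurable_cong] = S
  have intg: "integrable \<mu> (\<lambda>x. real (pcnt A n x))" if [measurable]: "A \<in> sets path_space" for A n
    unfolding pcnt_ind
    by (intro Bochner_Integration.integrable_sum integrable_real_indicator) (auto simp: S less_top[symmetric])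
  have intC: "integral\<^sup>L \<mu> (\<lambda>x. real (pcnt A n x)) = real n * measure \<mu> A"
    if [measurable]: "A \<in> sets path_space" for A n
  proof -
    have "integral\<^sup>L \<mu> (\<lambda>x. real (pcnt A n x)) = (\<Sum>m<n. integral\<^sup>L \<mu> (indicator (sh m -` A)))"
      unfolding pcnt_ind
      by (rule Bochner_Integration.integral_sum, rule integrable_real_indicator) (auto simp: S less_top[symmetric])
    also have "\<dots> = (\<Sum>m<n. measure \<mu> A)" by (simp add: sp_mu inv)
    finally show ?thesis by simp
  qed
  define D where "D = {x. \<exists>j::nat. \<exists>N::nat. \<forall>n\<ge>N. real (pcnt C n x) \<ge> real n / real (Suc j)}"
  have Dm[measurable]: "D \<in> sets path_space" unfolding D_def by (rule predS) measurable
  have Dinv: "\<forall>x. x \<in> D \<longleftrightarrow> sh 1 x \<in> D"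
  proof
    fix x
    have fr: "\<And>n. real (pcnt C (Suc n) x) \<le> real (pcnt C n (sh 1 x)) + 1"
         "\<And>n. real (pcnt C n (sh 1 x)) \<le> real (pcnt C (Suc n) x)"
      by (simp_all add: pcnt_front)
    show "x \<in> D \<longleftrightarrow> sh 1 x \<in> D"
    proof
      assume "x \<in> D"
      then obtain j N where jN: "\<And>n. n \<ge> N \<Longrightarrow> real (pcnt C n x) \<ge> real n / real (Suc j)"
        unfolding D_def by blast
      have "\<forall>n\<ge>N + 2 * Suc j. real (pcnt C n (sh 1 x)) \<ge> real n / real (Suc (2*j+1))"
      proof (intro allI impI)
        fix n assume n: "n \<ge> N + 2 * Suc j"
        have a: "real (Suc n) / real (Suc j) \<le> real (pcnt C n (sh 1 x)) + 1"
          using jN[of "Suc n"] fr(1)[of n] n by simp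
        have f: "(1+real j)*(2*real j) \<le> (1+real j)*real n"
          by (intro mult_left_mono) (use n in auto)
        have "real n / real (Suc (2*j+1)) \<le> real (Suc n) / real (Suc j) - 1"
          using f n by (simp add: field_simps algebra_simps)
        then show "real (pcnt C n (sh 1 x)) \<ge> real n / real (Suc (2*j+1))" using a by linarith
      qed
      then show "sh 1 x \<in> D" unfolding D_def by blast
    next
      assume "sh 1 x \<in> D"
      then obtain j N where jN: "\<And>n. n \<ge> N \<Longrightarrow> real (pcnt C n (sh 1 x)) \<ge> real n / real (Suc j)"
        unfolding D_def by blast
      have "\<forall>n\<ge>N + 2. real (pcnt C n x) \<ge> real n / real (Suc (2*j+1))"
      proof (intro allI impI)
        fix n assume n: "n \<ge> N + 2"
        then obtain m where m: "n = Suc m" by (cases n) auto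
        have a: "real m / real (Suc j) \<le> real (pcnt C n x)"
          using jN[of m] fr(2)[of m] n m by simp
        have f: "(1+real j)*1 \<le> (1+real j)*real m"
          by (intro mult_left_mono) (use n m in auto)
        have "real n / real (Suc (2*j+1)) \<le> real m / real (Suc j)"
          using f n m by (simp add: field_simps algebra_simps)
        then show "real (pcnt C n x) \<ge> real n / real (Suc (2*j+1))" using a by linarith
      qed
      then show "x \<in> D" unfolding D_def by blast
    qed
  qed
  have "measure \<mu> D \<noteq> 0"
  proof
    assume D0: "measure \<mu> D = 0"
    define p where "p = measure \<mu> C"
    define \<epsilon> where "\<epsilon> = p / 4"
    have ep: "\<epsilon> > 0" using pos by (simp add: \<epsilon>_def p_def)
    define bad where "bad N = {x. \<forall>n\<in>{1..N}. real (pcnt C n x) \<ge> \<epsilon> * n}" for N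
    have badm[measurable]: "bad N \<in> sets path_space" for N
      unfolding bad_def by (rule predS) measurable
    have dec: "decseq bad" unfolding decseq_def bad_def by auto
    obtain j0 :: nat where j0: "j0 > 0" "inverse (real j0) < \<epsilon>"
      using ex_inverse_of_nat_less[OF ep] by blast
    have "(\<Inter>N. bad N) \<subseteq> D"
    proof
      fix x assume "x \<in> (\<Inter>N. bad N)"
      then have h: "\<And>n. n \<ge> 1 \<Longrightarrow> real (pcnt C n x) \<ge> \<epsilon> * n" unfolding bad_def by fastforce
      have "\<forall>n\<ge>1. real (pcnt C n x) \<ge> real n / real (Suc j0)"
      proof (intro allI impI)
        fix n :: nat assume "n \<ge> 1"
        have "real n / real (Suc j0) \<le> real n * inverse (real j0)"
          using j0 by (simp add: field_simps)
        also have "\<dots> \<le> \<epsilon> * n" using j0 mult_right_mono[of "inverse (real j0)" \<epsilon> "real n"] by (simp add: mult.commute)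
        finally show "real (pcnt C n x) \<ge> real n / real (Suc j0)" using h[OF \<open>n \<ge> 1\<close>] by linarith
      qed
      then show "x \<in> D" unfolding D_def by blast
    qed
    then have "measure \<mu> (\<Inter>N. bad N) \<le> measure \<mu> D"
      by (intro finite_measure_mono) (auto simp: S)
    then have I0: "measure \<mu> (\<Inter>N. bad N) = 0" using D0 measure_nonneg[of \<mu>] by (metis antisym)
    have "(\<lambda>N. measure \<mu> (bad N)) \<longlonglongrightarrow> 0"
    proof -
      have "range bad \<subseteq> sets \<mu>" unfolding S using badm by blast
      from finite_Lim_measure_decseq[OF this dec] show ?thesis unfolding I0 .
    qed
    then obtain N0 where N0: "measure \<mu> (bad N0) < \<epsilon>"
    proof -
      have "eventually (\<lambda>N. measure \<mu> (bad N) < \<epsilon>) sequentially"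
        using order_tendstoD(2)[OF \<open>(\<lambda>N. measure \<mu> (bad N)) \<longlonglongrightarrow> 0\<close> ep] .
      then show ?thesis using that unfolding eventually_sequentially by blast
    qed
    define N where "N = Suc N0"
    have "bad N \<subseteq> bad N0" unfolding N_def bad_def by auto
    then have bN: "measure \<mu> (bad N) < \<epsilon>"
      using N0 finite_measure_mono[of "bad N" "bad N0"] by (auto simp: S)
    have pw: "real (pcnt C N x) \<le> \<epsilon> * real (N + N) + real (pcnt (bad N) (N + N) x)" for x
    proof (rule cover2)
      show "N \<ge> 1" unfolding N_def by simp
      show "\<epsilon> \<ge> 0" using ep by simp
      fix i assume "sh i x \<notin> bad N"
      then show "\<exists>n\<in>{1..N}. real (pcnt C n (sh i x)) < \<epsilon> * real n"
        unfolding bad_def by (auto simp: not_le)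
    qed
    have "real N * p = integral\<^sup>L \<mu> (\<lambda>x. real (pcnt C N x))" using intC[OF C] by (simp add: p_def)
    also have "\<dots> \<le> integral\<^sup>L \<mu> (\<lambda>x. \<epsilon> * real (N + N) + real (pcnt (bad N) (N + N) x))"
      by (rule integral_mono[OF intg[OF C] Bochner_Integration.integrable_add[OF integrable_const intg[OF badm]] pw])
    also have "\<dots> = \<epsilon> * real (N + N) + real (N+N) * measure \<mu> (bad N)"
      using intC[OF badm[of N] , of "N+N"] intg[OF badm[of N], of "N+N"] by (simp add: prob_space)
    also have "\<dots> < \<epsilon> * real (N + N) + real (N+N) * \<epsilon>"
      using bN unfolding N_def by (intro add_strict_left_mono mult_strict_left_mono) auto
    also have "\<dots> = real N * p" by (simp add: \<epsilon>_def)
    finally show False by simp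
  qed
  then have "measure \<mu> D = 1" using erg[OF Dm Dinv] by blast
  then have "AE x in \<mu>. x \<in> D" using prob_eq_1[of D] by (simp add: S)
  then show ?thesis unfolding D_def by simp
qed


lemma tau_count:
  assumes "card {t\<in>{1..B}. blk_match X k n t \<omega>} \<ge> i"
  shows "\<exists>s\<le>B. tau X k n i \<omega> = enat s \<and> card {t\<in>{1..s}. blk_match X k n t \<omega>} = i"
  using assms
proof (induction i)
  case 0 then show ?case by (intro exI[of _ 0]) (simp add: zero_enat_def)
next
  case (Suc i)
  let ?P = "\<lambda>t. blk_match X k n t \<omega>"
  from Suc obtain s where s: "s \<le> B" "tau X k n i \<omega> = enat s" "card {t\<in>{1..s}. ?P t} = i" by force
  have ex: "\<exists>t>s. ?P t"
  proof (rule ccontr)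
    assume "\<not> ?thesis"
    then have "{t\<in>{1..B}. ?P t} \<subseteq> {t\<in>{1..s}. ?P t}" by (auto simp: not_less)
    then have "card {t\<in>{1..B}. ?P t} \<le> card {t\<in>{1..s}. ?P t}" by (intro card_mono) auto
    then show False using Suc.prems s(3) by simp
  qed
  then obtain t0 where t0: "t0 > s" "?P t0" by blast
  have ex2: "\<exists>t. t > s \<and> t \<le> B \<and> ?P t"
  proof (rule ccontr)
    assume "\<not> ?thesis"
    then have "{t\<in>{1..B}. ?P t} \<subseteq> {t\<in>{1..s}. ?P t}" by (auto simp: not_less)
    then have "card {t\<in>{1..B}. ?P t} \<le> card {t\<in>{1..s}. ?P t}" by (intro card_mono) auto
    then show False using Suc.prems s(3) by simp
  qed
  then obtain t1 where t1: "t1 > s" "t1 \<le> B" "?P t1" by blast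
  define s' where "s' = (LEAST t. t > s \<and> ?P t)"
  have s'1: "s' > s \<and> ?P s'" unfolding s'_def by (rule LeastI[of _ t1]) (use t1 in auto)
  have s'2: "s' \<le> t1" unfolding s'_def by (rule Least_le) (use t1 in auto)
  have s'3: "\<And>t. s < t \<Longrightarrow> t < s' \<Longrightarrow> \<not> ?P t" unfolding s'_def using not_less_Least by blast
  have tau: "tau X k n (Suc i) \<omega> = enat s'" using s(2) ex by (simp add: s'_def)
  have "{t\<in>{1..s'}. ?P t} = insert s' {t\<in>{1..s}. ?P t}"
    using s'1 s'3 by (auto simp: not_less) (meson not_le order_le_less)
  then have "card {t\<in>{1..s'}. ?P t} = Suc i" using s'1 s(3) by simp
  then show ?case using tau s'2 t1 by (intro exI[of _ s']) auto
qed

lemma card_rev: "card {t\<in>{1..s::nat}. P (s - t)} = card {m. m < s \<and> P m}"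
proof -
  have "(\<lambda>m. s - m) ` {m. m < s \<and> P m} = {t\<in>{1..s}. P (s - t)}"
  proof
    show "{t\<in>{1..s}. P (s - t)} \<subseteq> (\<lambda>m. s - m) ` {m. m < s \<and> P m}"
    proof
      fix t assume t: "t \<in> {t\<in>{1..s}. P (s - t)}"
      then have ts: "t \<le> s" "1 \<le> t" by auto
      then have "t = s - (s - t)" "s - t < s" by auto
      then show "t \<in> (\<lambda>m. s - m) ` {m. m < s \<and> P m}" using t by blast
    qed
  qed auto
  moreover have "inj_on (\<lambda>m. s - m) {m. m < s \<and> P m}" by (auto simp: inj_on_def)
  ultimately show ?thesis by (metis card_image)
qed

lemma pcnt_card: "pcnt C n x = card {m. m < n \<and> sh m x \<in> C}"
proof (induction n)
  case 0 then show ?case by simp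
next
  case (Suc n)
  have "{m. m < Suc n \<and> sh m x \<in> C} = (if sh n x \<in> C then insert n {m. m < n \<and> sh m x \<in> C} else {m. m < n \<and> sh m x \<in> C})"
    by (auto simp: less_Suc_eq)
  then show ?case using Suc by (simp add: pcnt_Suc)
qed


definition blk :: "nat \<Rightarrow> nat \<Rightarrow> (int \<Rightarrow> 'b) \<Rightarrow> 'b list" where
  "blk k s x = map (\<lambda>j. x (int s + int j)) [0..<k]"
definition Cb :: "'b list \<Rightarrow> (int \<Rightarrow> 'b) set" where
  "Cb bl = {y. \<forall>j<length bl. y (int j) = bl ! j}"

lemma Cb_sets[measurable]: "Cb bl \<in> sets (path_space :: (int \<Rightarrow> 'b) measure)"
  unfolding Cb_def by (rule predS) measurable

lemma sh_in_blk: "sh s x \<in> Cb (blk k s x)"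
  by (simp add: Cb_def blk_def sh_def ac_simps)

lemma match_iff:
  assumes "k \<le> n + 1" "1 \<le> t" "t \<le> n + 1 - k"
  shows "blk_match X k n t \<omega> \<longleftrightarrow> sh (n + 1 - k - t) (\<lambda>i. X i \<omega>) \<in> Cb (blk k (n + 1 - k) (\<lambda>i. X i \<omega>))"
proof -
  have e1: "int (n + 1 - k) = int n - int k + 1" using assms by simp
  have e2: "int (n + 1 - k - t) = int n - int k + 1 - int t" using assms by simp
  show ?thesis unfolding blk_match_def Cb_def blk_def sh_def e1 e2
    by (simp add: ac_simps)
qed

lemma count_eq:
  assumes "k \<le> n + 1"
  shows "card {t\<in>{1..n+1-k}. blk_match X k n t \<omega>} = pcnt (Cb (blk k (n + 1 - k) (\<lambda>i. X i \<omega>))) (n + 1 - k) (\<lambda>i. X i \<omega>)"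
proof -
  let ?s = "n + 1 - k"
  let ?P = "\<lambda>m. sh m (\<lambda>i. X i \<omega>) \<in> Cb (blk k ?s (\<lambda>i. X i \<omega>))"
  have "{t\<in>{1..?s}. blk_match X k n t \<omega>} = {t\<in>{1..?s}. ?P (?s - t)}"
  proof (rule Collect_cong)
    fix t show "(t \<in> {1..?s} \<and> blk_match X k n t \<omega>) = (t \<in> {1..?s} \<and> ?P (?s - t))"
      using match_iff[OF assms, of t X \<omega>] by auto
  qed
  then have "card {t\<in>{1..?s}. blk_match X k n t \<omega>} = card {m. m < ?s \<and> ?P m}"
    using card_rev[of ?s ?P] by (simp only:)
  then show ?thesis by (simp only: pcnt_card)
qed

lemma kappa_ge:
  assumes "1 \<le> k" "k \<le> K n" "k \<le> n + 1" "J n \<le> card {t\<in>{1..n+1-k}. blk_match X k n t \<omega>}"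
  shows "k \<le> kappa X K J n \<omega>"
proof -
  obtain s where s: "s \<le> n + 1 - k" "tau X k n (J n) \<omega> = enat s"
    using tau_count[OF assms(4)] by blast
  define S where "S = {k. 1 \<le> k \<and> k \<le> K n \<and> k \<le> n + 1 \<and> tau X k n (J n) \<omega> \<le> enat (n + 1 - k)}"
  have kS: "k \<in> S" using assms s unfolding S_def by auto
  have fS: "finite S" unfolding S_def by (rule finite_subset[of _ "{..K n}"]) auto
  have "kappa X K J n \<omega> = Max S" using kS unfolding kappa_def S_def[symmetric] Let_def by auto
  then show ?thesis using Max_ge[OF fS kS] by simp
qed

lemma ev_block:
  fixes x :: "int \<Rightarrow> 'b" and J :: "nat \<Rightarrow> nat"
  assumes J: "(\<lambda>n. real (J n) / real n) \<longlonglongrightarrow> 0" and fin: "finite BL"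
    and cov: "\<And>n. blk k (n + 1 - k) x \<in> BL"
    and h: "\<And>bl. bl \<in> BL \<Longrightarrow> (\<forall>m. sh m x \<notin> Cb bl) \<or> (\<exists>j N. \<forall>n\<ge>N. real (pcnt (Cb bl) n x) \<ge> real n / real (Suc j))"
  shows "eventually (\<lambda>n. J n \<le> pcnt (Cb (blk k (n + 1 - k) x)) (n + 1 - k) x) sequentially"
proof -
  define G where "G = {bl\<in>BL. \<exists>j N. \<forall>n\<ge>N. real (pcnt (Cb bl) n x) \<ge> real n / real (Suc j)}"
  have fG: "finite G" using fin unfolding G_def by simp
  have evG: "eventually (\<lambda>n. J n \<le> pcnt (Cb bl) (n + 1 - k) x) sequentially" if blG: "bl \<in> G" for bl
  proof -
    obtain j N where jN0: "\<forall>n\<ge>N. real (pcnt (Cb bl) n x) \<ge> real n / real (Suc j)"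
      using blG unfolding G_def by blast
    note jN = jN0[rule_format]
    have c: "(0::real) < 1 / (2 * real (Suc j))" by simp
    have e1: "eventually (\<lambda>n. real (J n) / real n < 1 / (2 * real (Suc j))) sequentially"
      using order_tendstoD(2)[OF J c] .
    have e2: "eventually (\<lambda>n. n \<ge> N + 2 * k + 1) sequentially" by (rule eventually_ge_at_top)
    have "eventually (\<lambda>n. N + 2 * k + 1 \<le> n \<and> real (J n) / real n < 1 / (2 * real (Suc j))) sequentially"
      using eventually_conj[OF e2 e1] .
    then show ?thesis
    proof (rule eventually_mono)
      fix n assume nn: "N + 2 * k + 1 \<le> n \<and> real (J n) / real n < 1 / (2 * real (Suc j))"
        then have n: "N + 2 * k + 1 \<le> n" and jn: "real (J n) / real n < 1 / (2 * real (Suc j))" by auto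
        have npos: "real n > 0" using n by simp
        have a0: "real (J n) < 1 / (2 * real (Suc j)) * real n" using jn npos by (simp only: divide_less_eq)
        have a: "real (J n) < real n / (2 * real (Suc j))" using a0 by simp
        have sN: "n + 1 - k \<ge> N" using n by simp
        have s20: "n \<le> 2 * (n + 1 - k)" using n by arith
        have s21: "real n \<le> real (2 * (n + 1 - k))" using s20 by (simp only: of_nat_le_iff)
        have s2: "real (n + 1 - k) \<ge> real n / 2" using s21 by simp
        have "real n / (2 * real (Suc j)) = (real n / 2) / real (Suc j)" by simp
        also have "\<dots> \<le> real (n + 1 - k) / real (Suc j)" using s2 by (intro divide_right_mono) auto
        also have "\<dots> \<le> real (pcnt (Cb bl) (n + 1 - k) x)" using jN[OF sN] .
        finally show "J n \<le> pcnt (Cb bl) (n + 1 - k) x" using a by simp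
    qed
  qed
  have "eventually (\<lambda>n. \<forall>bl\<in>G. J n \<le> pcnt (Cb bl) (n + 1 - k) x) sequentially"
    by (intro eventually_ball_finite fG ballI evG)
  then show ?thesis
  proof (rule eventually_mono)
    fix n assume H: "\<forall>bl\<in>G. J n \<le> pcnt (Cb bl) (n + 1 - k) x"
    let ?bl = "blk k (n + 1 - k) x"
    have b1: "?bl \<in> BL" by (rule cov)
    have b2: "sh (n + 1 - k) x \<in> Cb ?bl" by (rule sh_in_blk)
    have "\<not> (\<forall>m. sh m x \<notin> Cb ?bl)" using b2 by blast
    then have "\<exists>j N. \<forall>n\<ge>N. real (pcnt (Cb ?bl) n x) \<ge> real n / real (Suc j)" using h[OF b1] by blast
    then have "?bl \<in> G" using b1 unfolding G_def by blast
    then show "J n \<le> pcnt (Cb ?bl) (n + 1 - k) x" using H by blast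
  qed
qed


theorem lemma2:
  fixes M :: "'a measure" and X :: "int \<Rightarrow> 'a \<Rightarrow> 'b::finite"
    and K J :: "nat \<Rightarrow> nat"
  assumes "prob_space M"
    and "stationary_process M X"
    and "ergodic_process M X"
    and "mono K" and "mono J"
    and "\<And>n. K n \<ge> 1" and "\<And>n. J n \<ge> 1"
    and "filterlim K at_top sequentially"
    and "filterlim J at_top sequentially"
    and "(\<lambda>n. real (J n) / real n) \<longlonglongrightarrow> 0"
  shows "AE \<omega> in M. filterlim (\<lambda>n. kappa X K J n \<omega>) at_top sequentially"
proof -
  interpret M: prob_space M by fact
  have Xm[measurable]: "\<And>i. X i \<in> measurable M (count_space UNIV)"
    using assms(2) unfolding stationary_process_def by blast
  define path where "path = (\<lambda>\<omega> i. X i \<omega>)"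
  have pm[measurable]: "path \<in> measurable M (path_space :: (int \<Rightarrow> 'b) measure)"
    unfolding path_def by (rule measurable_PiM_single') (auto simp: space_PiM)
  have shp: "\<And>m. (\<lambda>\<omega> i. X (i + int m) \<omega>) = (\<lambda>\<omega>. sh m (path \<omega>))"
    by (simp add: sh_def path_def)
  define \<mu> where "\<mu> = distr M (path_space :: (int \<Rightarrow> 'b) measure) path"
  have P\<mu>: "prob_space \<mu>" unfolding \<mu>_def by (rule M.prob_space_distr[OF pm])
  have S\<mu>: "sets \<mu> = sets path_space" unfolding \<mu>_def by simp
  have inv: "measure \<mu> (sh m -` A) = measure \<mu> A" if A[measurable]: "A \<in> sets path_space" for m A
  proof -
    have "measure \<mu> (sh m -` A) = measure M (path -` (sh m -` A) \<inter> space M)"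
      unfolding \<mu>_def by (rule measure_distr[OF pm]) measurable
    also have "\<dots> = measure M ((\<lambda>\<omega>. sh m (path \<omega>)) -` A \<inter> space M)" by (simp add: vimage_def)
    also have "\<dots> = measure (distr M path_space (\<lambda>\<omega>. sh m (path \<omega>))) A"
      by (rule measure_distr[symmetric]) measurable
    also have "distr M path_space (\<lambda>\<omega>. sh m (path \<omega>)) = \<mu>"
      using assms(2) unfolding stationary_process_def \<mu>_def shp[symmetric]
      by (simp add: path_def)
    finally show ?thesis .
  qed
  have erg: "measure \<mu> A = 0 \<or> measure \<mu> A = 1"
    if A[measurable]: "A \<in> sets path_space" and Ai: "\<forall>x. x \<in> A \<longleftrightarrow> sh 1 x \<in> A" for A
  proof -
    have Ai': "\<forall>x. x \<in> A \<longleftrightarrow> (\<lambda>i. x (i + 1)) \<in> A" using Ai by (simp add: sh_def)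
    have "measure \<mu> A = measure M (path -` A \<inter> space M)"
      unfolding \<mu>_def by (rule measure_distr[OF pm A])
    also have "path -` A \<inter> space M = {\<omega> \<in> space M. (\<lambda>i. X i \<omega>) \<in> A}" by (auto simp: path_def)
    finally show ?thesis using assms(3) Ai' A unfolding ergodic_process_def by auto
  qed
  have Q: "AE x in \<mu>. \<forall>k. eventually (\<lambda>n. J n \<le> pcnt (Cb (blk k (n + 1 - k) x)) (n + 1 - k) x) sequentially"
  proof (rule AE_all_countable[THEN iffD2], rule allI)
    fix k :: nat
    define BL where "BL = {bl :: 'b list. set bl \<subseteq> UNIV \<and> length bl = k}"
    have fin: "finite BL" unfolding BL_def by (rule finite_lists_length_eq) simp
    have "AE x in \<mu>. \<forall>bl\<in>BL. (\<forall>m. sh m x \<notin> Cb bl) \<or> (\<exists>j N. \<forall>n\<ge>N. real (pcnt (Cb bl) n x) \<ge> real n / real (Suc j))"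
    proof (rule AE_finite_allI[OF fin])
      fix bl :: "'b list"
      show "AE x in \<mu>. (\<forall>m. sh m x \<notin> Cb bl) \<or> (\<exists>j N. \<forall>n\<ge>N. real (pcnt (Cb bl) n x) \<ge> real n / real (Suc j))"
      proof (cases "measure \<mu> (Cb bl) = 0")
        case True
        have "AE x in \<mu>. \<forall>m. sh m x \<notin> Cb bl"
        proof (rule AE_all_countable[THEN iffD2], rule allI)
          fix m
          have "measure \<mu> (sh m -` Cb bl) = 0" using inv[of "Cb bl" m] True by simp
          then have "AE x in \<mu>. x \<notin> sh m -` Cb bl"
            using prob_space.prob_eq_0[OF P\<mu>, of "sh m -` Cb bl"] S\<mu> by simp
          then show "AE x in \<mu>. sh m x \<notin> Cb bl" by simp
        qed
        then show ?thesis by (rule AE_mp) auto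
      next
        case False
        then have pos: "measure \<mu> (Cb bl) > 0" using measure_nonneg[of \<mu> "Cb bl"] by linarith
        have "AE x in \<mu>. \<exists>j N. \<forall>n\<ge>N. real (pcnt (Cb bl) n x) \<ge> real n / real (Suc j)"
          by (rule core[OF P\<mu> S\<mu> inv erg Cb_sets pos]) auto
        then show ?thesis by (rule AE_mp) auto
      qed
    qed
    then show "AE x in \<mu>. eventually (\<lambda>n. J n \<le> pcnt (Cb (blk k (n + 1 - k) x)) (n + 1 - k) x) sequentially"
    proof (rule AE_mp, intro AE_I2 impI)
      fix x assume H: "\<forall>bl\<in>BL. (\<forall>m. sh m x \<notin> Cb bl) \<or> (\<exists>j N. \<forall>n\<ge>N. real (pcnt (Cb bl) n x) \<ge> real n / real (Suc j))"
      show "eventually (\<lambda>n. J n \<le> pcnt (Cb (blk k (n + 1 - k) x)) (n + 1 - k) x) sequentially"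
        by (rule ev_block[OF assms(10) fin]) (use H in \<open>auto simp: BL_def blk_def\<close>)
    qed
  qed
  have Q': "AE \<omega> in M. \<forall>k. eventually (\<lambda>n. J n \<le> pcnt (Cb (blk k (n + 1 - k) (path \<omega>))) (n + 1 - k) (path \<omega>)) sequentially"
    by (rule AE_distrD[OF pm]) (use Q[unfolded \<mu>_def] in simp)
  show ?thesis
  proof (rule AE_mp[OF Q'], intro AE_I2 impI)
    fix \<omega> assume H: "\<forall>k. eventually (\<lambda>n. J n \<le> pcnt (Cb (blk k (n + 1 - k) (path \<omega>))) (n + 1 - k) (path \<omega>)) sequentially"
    show "filterlim (\<lambda>n. kappa X K J n \<omega>) at_top sequentially"
      unfolding filterlim_at_top
    proof
      fix Z :: nat
      define k where "k = max Z 1"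
      have e1: "eventually (\<lambda>n. k \<le> K n) sequentially" using assms(8) unfolding filterlim_at_top by blast
      have e2: "eventually (\<lambda>n. k \<le> n) sequentially" by (rule eventually_ge_at_top)
      have e3: "eventually (\<lambda>n. J n \<le> pcnt (Cb (blk k (n + 1 - k) (path \<omega>))) (n + 1 - k) (path \<omega>)) sequentially"
        using H by blast
      show "eventually (\<lambda>n. Z \<le> kappa X K J n \<omega>) sequentially"
        using eventually_conj[OF e1 eventually_conj[OF e2 e3]]
      proof (rule eventually_mono)
        fix n assume nn: "k \<le> K n \<and> k \<le> n \<and> J n \<le> pcnt (Cb (blk k (n + 1 - k) (path \<omega>))) (n + 1 - k) (path \<omega>)"
        have kn: "k \<le> n + 1" using nn by simp
        have "J n \<le> card {t\<in>{1..n+1-k}. blk_match X k n t \<omega>}"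
          using nn count_eq[OF kn, of X \<omega>] by (simp add: path_def)
        then have "k \<le> kappa X K J n \<omega>"
          by (intro kappa_ge) (use nn k_def in auto)
        then show "Z \<le> kappa X K J n \<omega>" unfolding k_def by simp
      qed
    qed
  qed
qed
end
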